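(* Let $\phi:\mathbb{N}\cup\{0\}\to\mathbb{R}_+$ be such that for every $C>0$ the series $\sum_{k\in\mathbb{N}}C^k\phi(k)(k!)^{-2}$ converges. Then $\mathcal{S}\subset T_\phi(V)$, i.e. the signature $S(\gamma)_{s,t}$ of every continuous bounded variation path $\gamma$ and every $s<t$ belongs to $T_\phi(V)$.
   Context: $V$ is a finite-dimensional real inner product space, $\langle\cdot,\cdot\rangle_k$ the induced Hilbert–Schmidt inner product on $V^{\otimes k}$, $T(V)=\bigoplus_kV^{\otimes k}$ (tensor polynomials) and $T((V))=\prod_kV^{\otimes k}$ (formal tensor series). $\langle a,b\rangle_\phi=\sum_k\phi(k)\langle a_k,b_k\rangle_k$ and $T_\phi(V)$ is the Hilbert space completion of $T(V)$ under it, viewed inside $T((V))$. Signature: $S(\gamma)_{s,t}=1+\sum_{k\ge1}\int_{s<u_1<\dots<u_k<t}d\gamma_{u_1}\otimes\cdots\otimes d\gamma_{u_k}$, and $\mathcal{S}=\{S(\gamma)_{s,t}:\gamma \text{ continuous of bounded variation},\ s<t\}$. *)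

theory Defs
  imports "HOL-Analysis.Analysis"
begin

definition is_partition :: "real \<Rightarrow> real \<Rightarrow> nat \<Rightarrow> (nat \<Rightarrow> real) \<Rightarrow> bool" where
  "is_partition a b n x \<longleftrightarrow> x 0 = a \<and> x n = b \<and> (\<forall>j<n. x j \<le> x (Suc j))"

definition bounded_variation_on :: "(real \<Rightarrow> 'v::real_normed_vector) \<Rightarrow> real \<Rightarrow> real \<Rightarrow> bool" where
  "bounded_variation_on \<gamma> a b \<longleftrightarrow>
     (\<exists>M. \<forall>n x. is_partition a b n x \<longrightarrow> (\<Sum>j<n. norm (\<gamma> (x (Suc j)) - \<gamma> (x j))) \<le> M)"

definition RS_sum :: "(real \<Rightarrow> real) \<Rightarrow> (real \<Rightarrow> real) \<Rightarrow> nat \<Rightarrow> (nat \<Rightarrow> real) \<Rightarrow> (nat \<Rightarrow> real) \<Rightarrow> real" where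
  "RS_sum f g n x \<tau> = (\<Sum>j<n. f (\<tau> j) * (g (x (Suc j)) - g (x j)))"

definition has_RS_integral :: "(real \<Rightarrow> real) \<Rightarrow> (real \<Rightarrow> real) \<Rightarrow> real \<Rightarrow> real \<Rightarrow> real \<Rightarrow> bool" where
  "has_RS_integral f g a b I \<longleftrightarrow>
     (\<forall>\<epsilon>>0. \<exists>\<delta>>0. \<forall>n x \<tau>. is_partition a b n x \<and>
        (\<forall>j<n. x (Suc j) - x j < \<delta> \<and> x j \<le> \<tau> j \<and> \<tau> j \<le> x (Suc j))
        \<longrightarrow> \<bar>RS_sum f g n x \<tau> - I\<bar> < \<epsilon>)"

definition RS_integral :: "(real \<Rightarrow> real) \<Rightarrow> (real \<Rightarrow> real) \<Rightarrow> real \<Rightarrow> real \<Rightarrow> real" where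
  "RS_integral f g a b = (THE I. has_RS_integral f g a b I)"

text \<open>Formal tensor series in T((V)) are represented by their coordinates with respect to the
  orthonormal basis e_{i1} \<otimes> ... \<otimes> e_{ik} built from Basis: a word w (list of basis vectors)
  of length k gives the coefficient of a_k on the corresponding basis tensor.
  Coordinates on words not made of Basis vectors are irrelevant.\<close>
type_synonym 'v tensor_series = "'v list \<Rightarrow> real"

definition words :: "nat \<Rightarrow> 'v::euclidean_space list set" where
  "words k = {w. length w = k \<and> set w \<subseteq> Basis}"

definition level_norm2 :: "'v::euclidean_space tensor_series \<Rightarrow> nat \<Rightarrow> real" where
  "level_norm2 a k = (\<Sum>w\<in>words k. (a w)\<^sup>2)"

text \<open>T_phi(V): completion of T(V) under the phi-weighted inner product, viewed inside T((V)).\<close>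
definition T_phi :: "(nat \<Rightarrow> real) \<Rightarrow> 'v::euclidean_space tensor_series set" where
  "T_phi \<phi> = {a. summable (\<lambda>k. \<phi> k * level_norm2 a k)}"

text \<open>Iterated integrals: word read left to right, first letter integrated at the smallest time.
  sig_rev takes the reversed word.\<close>
fun sig_rev :: "(real \<Rightarrow> 'v::euclidean_space) \<Rightarrow> real \<Rightarrow> 'v list \<Rightarrow> real \<Rightarrow> real" where
  "sig_rev \<gamma> s [] t = 1"
| "sig_rev \<gamma> s (e # w) t = RS_integral (\<lambda>u. sig_rev \<gamma> s w u) (\<lambda>u. \<gamma> u \<bullet> e) s t"

definition signature :: "(real \<Rightarrow> 'v::euclidean_space) \<Rightarrow> real \<Rightarrow> real \<Rightarrow> 'v tensor_series" where
  "signature \<gamma> s t = (\<lambda>w. sig_rev \<gamma> s (rev w) t)"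

end

theory Submission
  imports Defs
begin

lemma part_mono:
  assumes "is_partition a b n x" "i \<le> j" "j \<le> n"
  shows "x i \<le> x j"
  using assms(2,3)
proof (induction j)
  case 0 then show ?case by simp
next
  case (Suc j)
  show ?case
  proof (cases "i = Suc j")
    case False
    then have "x i \<le> x j" using Suc by auto
    also have "x j \<le> x (Suc j)" using assms(1) Suc.prems unfolding is_partition_def by auto
    finally show ?thesis .
  qed simp
qed
lemma part_range:
  assumes "is_partition a b n x" "j \<le> n"
  shows "a \<le> x j \<and> x j \<le> b"
  using part_mono[OF assms(1), of 0 j] part_mono[OF assms(1), of j n] assms
  unfolding is_partition_def by auto


lemma RS_sum_Suc:
  "RS_sum f g (Suc n) x \<tau> = f (\<tau> 0) * (g (x 1) - g (x 0)) + RS_sum f g n (x \<circ> Suc) (\<tau> \<circ> Suc)"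
  unfolding RS_sum_def by (subst sum.lessThan_Suc_shift) simp

lemma RS_sum_0[simp]: "RS_sum f g 0 x \<tau> = 0"
  unfolding RS_sum_def by simp

lemma RS_sum_degenerate:
  assumes "is_partition a a n x"
  shows "RS_sum f g n x \<tau> = 0"
proof -
  have "\<And>j. j \<le> n \<Longrightarrow> x j = a" using part_range[OF assms] by (meson order_antisym)
  then show ?thesis unfolding RS_sum_def by (intro sum.neutral) auto
qed

lemma compare_step:
  fixes f g W :: "real \<Rightarrow> real"
  assumes P: "is_partition a b (Suc n) x" and Q: "is_partition a b (Suc m) y"
    and le: "x 1 \<le> y 1"
    and inv: "\<forall>j<Suc n. \<forall>i<Suc m. x j \<le> y (Suc i) \<and> y i \<le> x (Suc j) \<longrightarrow> \<bar>f (\<tau> j) - f (\<sigma> i)\<bar> \<le> \<epsilon>"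
    and dom: "\<forall>u v. a \<le> u \<and> u \<le> v \<and> v \<le> b \<longrightarrow> \<bar>g v - g u\<bar> \<le> W v - W u"
    and eps: "\<epsilon> \<ge> 0"
    and IH: "\<And>x' y'. is_partition (x 1) b n x' \<Longrightarrow> is_partition (x 1) b (Suc m) y' \<Longrightarrow>
        (\<forall>j<n. \<forall>i<Suc m. x' j \<le> y' (Suc i) \<and> y' i \<le> x' (Suc j) \<longrightarrow> \<bar>f ((\<tau> \<circ> Suc) j) - f (\<sigma> i)\<bar> \<le> \<epsilon>) \<Longrightarrow>
        (\<forall>u v. x 1 \<le> u \<and> u \<le> v \<and> v \<le> b \<longrightarrow> \<bar>g v - g u\<bar> \<le> W v - W u) \<Longrightarrow>
        \<bar>RS_sum f g n x' (\<tau> \<circ> Suc) - RS_sum f g (Suc m) y' \<sigma>\<bar> \<le> \<epsilon> * (W b - W (x 1))"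
  shows "\<bar>RS_sum f g (Suc n) x \<tau> - RS_sum f g (Suc m) y \<sigma>\<bar> \<le> \<epsilon> * (W b - W a)"
proof -
  define y' where "y' = y(0 := x 1)"
  have x0: "x 0 = a" and y0: "y 0 = a" using P Q unfolding is_partition_def by auto
  have x1r: "a \<le> x 1 \<and> x 1 \<le> b" using part_range[OF P, of 1] by simp
  have y1r: "a \<le> y 1" using part_range[OF Q, of 1] by simp
  have P': "is_partition (x 1) b n (x \<circ> Suc)" using P unfolding is_partition_def by auto
  have Q': "is_partition (x 1) b (Suc m) y'" using Q le unfolding is_partition_def y'_def
    by (auto simp: less_Suc_eq_0_disj)
  have inv': "\<forall>j<n. \<forall>i<Suc m. (x \<circ> Suc) j \<le> y' (Suc i) \<and> y' i \<le> (x \<circ> Suc) (Suc j) \<longrightarrow> \<bar>f ((\<tau> \<circ> Suc) j) - f (\<sigma> i)\<bar> \<le> \<epsilon>"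
  proof (intro allI impI)
    fix j i assume j: "j < n" and i: "i < Suc m" and ov: "(x \<circ> Suc) j \<le> y' (Suc i) \<and> y' i \<le> (x \<circ> Suc) (Suc j)"
    have "y i \<le> x (Suc (Suc j))"
    proof (cases "i = 0")
      case True
      then show ?thesis using y0 part_range[OF P, of "Suc (Suc j)"] j by simp
    next
      case False
      then show ?thesis using ov y'_def by simp
    qed
    moreover have "x (Suc j) \<le> y (Suc i)" using ov y'_def by simp
    ultimately show "\<bar>f ((\<tau> \<circ> Suc) j) - f (\<sigma> i)\<bar> \<le> \<epsilon>" using inv j i by auto
  qed
  have dom': "\<forall>u v. x 1 \<le> u \<and> u \<le> v \<and> v \<le> b \<longrightarrow> \<bar>g v - g u\<bar> \<le> W v - W u"
    using dom x1r by auto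
  have ih: "\<bar>RS_sum f g n (x \<circ> Suc) (\<tau> \<circ> Suc) - RS_sum f g (Suc m) y' \<sigma>\<bar> \<le> \<epsilon> * (W b - W (x 1))"
    using IH[OF P' Q' inv' dom'] .
  have e1: "RS_sum f g (Suc m) y \<sigma> = f (\<sigma> 0) * (g (x 1) - g a) + RS_sum f g (Suc m) y' \<sigma>"
    unfolding RS_sum_Suc y'_def using y0 by (simp add: algebra_simps comp_def)
  have e2: "RS_sum f g (Suc n) x \<tau> = f (\<tau> 0) * (g (x 1) - g a) + RS_sum f g n (x \<circ> Suc) (\<tau> \<circ> Suc)"
    unfolding RS_sum_Suc using x0 by simp
  have f0: "\<bar>f (\<tau> 0) - f (\<sigma> 0)\<bar> \<le> \<epsilon>" using inv x0 y0 x1r y1r by auto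
  have g0: "\<bar>g (x 1) - g a\<bar> \<le> W (x 1) - W a" using dom x1r by auto
  have "\<bar>(f (\<tau> 0) - f (\<sigma> 0)) * (g (x 1) - g a)\<bar> \<le> \<epsilon> * (W (x 1) - W a)"
    unfolding abs_mult using f0 g0 eps by (intro mult_mono) auto
  then have "\<bar>RS_sum f g (Suc n) x \<tau> - RS_sum f g (Suc m) y \<sigma>\<bar> \<le> \<epsilon> * (W (x 1) - W a) + \<epsilon> * (W b - W (x 1))"
    unfolding e1 e2 using ih by (simp add: algebra_simps abs_le_iff) 
  then show ?thesis by (simp add: algebra_simps)
qed



lemma compare_main:
  fixes f g W :: "real \<Rightarrow> real"
  assumes "N = n + m" "is_partition a b n x" "is_partition a b m y"
    "\<forall>j<n. \<forall>i<m. x j \<le> y (Suc i) \<and> y i \<le> x (Suc j) \<longrightarrow> \<bar>f (\<tau> j) - f (\<sigma> i)\<bar> \<le> \<epsilon>"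
    "\<forall>u v. a \<le> u \<and> u \<le> v \<and> v \<le> b \<longrightarrow> \<bar>g v - g u\<bar> \<le> W v - W u"
    "\<epsilon> \<ge> 0"
  shows "\<bar>RS_sum f g n x \<tau> - RS_sum f g m y \<sigma>\<bar> \<le> \<epsilon> * (W b - W a)"
  using assms
proof (induction N arbitrary: n m a x y \<tau> \<sigma> rule: less_induct)
  case (less N)
  show ?case
  proof (cases "n = 0 \<or> m = 0")
    case True
    then have ab: "a = b" using less.prems(2,3) unfolding is_partition_def by auto
    have "RS_sum f g n x \<tau> = 0" "RS_sum f g m y \<sigma> = 0"
      using RS_sum_degenerate[of a n x] RS_sum_degenerate[of a m y] less.prems(2,3) ab by auto
    then show ?thesis using ab by simp
  next
    case False
    then obtain n' m' where nm: "n = Suc n'" "m = Suc m'" by (metis not0_implies_Suc)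
    have p1: "is_partition a b (Suc n') x" and p2: "is_partition a b (Suc m') y" using less.prems(2,3) nm by simp_all
    have inv1: "\<forall>j<Suc n'. \<forall>i<Suc m'. x j \<le> y (Suc i) \<and> y i \<le> x (Suc j) \<longrightarrow> \<bar>f (\<tau> j) - f (\<sigma> i)\<bar> \<le> \<epsilon>"
      using less.prems(4) nm by simp
    have inv2: "\<forall>j<Suc m'. \<forall>i<Suc n'. y j \<le> x (Suc i) \<and> x i \<le> y (Suc j) \<longrightarrow> \<bar>f (\<sigma> j) - f (\<tau> i)\<bar> \<le> \<epsilon>"
    proof (intro allI impI)
      fix j i assume "j < Suc m'" "i < Suc n'" "y j \<le> x (Suc i) \<and> x i \<le> y (Suc j)"
      then show "\<bar>f (\<sigma> j) - f (\<tau> i)\<bar> \<le> \<epsilon>" using less.prems(4) nm by (simp add: abs_minus_commute)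
    qed
    have dom: "\<forall>u v. a \<le> u \<and> u \<le> v \<and> v \<le> b \<longrightarrow> \<bar>g v - g u\<bar> \<le> W v - W u" and eps: "\<epsilon> \<ge> 0" using less.prems(5,6) by simp_all
    show ?thesis
    proof (cases "x 1 \<le> y 1")
      case True
      have IHx: "\<bar>RS_sum f g n' x' (\<tau> \<circ> Suc) - RS_sum f g (Suc m') y' \<sigma>\<bar> \<le> \<epsilon> * (W b - W (x 1))"
        if "is_partition (x 1) b n' x'" "is_partition (x 1) b (Suc m') y'"
          "\<forall>j<n'. \<forall>i<Suc m'. x' j \<le> y' (Suc i) \<and> y' i \<le> x' (Suc j) \<longrightarrow> \<bar>f ((\<tau> \<circ> Suc) j) - f (\<sigma> i)\<bar> \<le> \<epsilon>"
          "\<forall>u v. x 1 \<le> u \<and> u \<le> v \<and> v \<le> b \<longrightarrow> \<bar>g v - g u\<bar> \<le> W v - W u" for x' y'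
      proof -
        have lt: "n' + Suc m' < N" using less.prems(1) nm by simp
        show ?thesis by (rule less.IH[OF lt refl that(1,2) that(3) that(4) eps])
      qed
      show ?thesis unfolding nm by (rule compare_step[where f=f and g=g and W=W and \<tau>=\<tau> and \<sigma>=\<sigma> and \<epsilon>=\<epsilon> and a=a and b=b and x=x and y=y and n=n' and m=m', OF p1 p2 True inv1 dom eps], rule IHx, assumption+)
    next
      case False
      then have le: "y 1 \<le> x 1" by simp
      have IHx: "\<bar>RS_sum f g m' x' (\<sigma> \<circ> Suc) - RS_sum f g (Suc n') y' \<tau>\<bar> \<le> \<epsilon> * (W b - W (y 1))"
        if "is_partition (y 1) b m' x'" "is_partition (y 1) b (Suc n') y'"
          "\<forall>j<m'. \<forall>i<Suc n'. x' j \<le> y' (Suc i) \<and> y' i \<le> x' (Suc j) \<longrightarrow> \<bar>f ((\<sigma> \<circ> Suc) j) - f (\<tau> i)\<bar> \<le> \<epsilon>"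
          "\<forall>u v. y 1 \<le> u \<and> u \<le> v \<and> v \<le> b \<longrightarrow> \<bar>g v - g u\<bar> \<le> W v - W u" for x' y'
      proof -
        have lt: "m' + Suc n' < N" using less.prems(1) nm by simp
        show ?thesis by (rule less.IH[OF lt refl that(1,2) that(3) that(4) eps])
      qed
      have "\<bar>RS_sum f g (Suc m') y \<sigma> - RS_sum f g (Suc n') x \<tau>\<bar> \<le> \<epsilon> * (W b - W a)" by (rule compare_step[where f=f and g=g and W=W and \<tau>=\<sigma> and \<sigma>=\<tau> and \<epsilon>=\<epsilon> and a=a and b=b and x=y and y=x and n=m' and m=n', OF p2 p1 le inv2 dom eps], rule IHx, assumption+)
      then show ?thesis unfolding nm by (simp add: abs_minus_commute)
    qed
  qed
qed



definition rsfine :: "real \<Rightarrow> nat \<Rightarrow> (nat \<Rightarrow> real) \<Rightarrow> (nat \<Rightarrow> real) \<Rightarrow> bool" where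
  "rsfine \<delta> n x \<tau> \<longleftrightarrow> (\<forall>j<n. x (Suc j) - x j < \<delta> \<and> x j \<le> \<tau> j \<and> \<tau> j \<le> x (Suc j))"

lemma has_RS_integral_fine:
  "has_RS_integral f g a b I \<longleftrightarrow>
     (\<forall>\<epsilon>>0. \<exists>\<delta>>0. \<forall>n x \<tau>. is_partition a b n x \<and> rsfine \<delta> n x \<tau> \<longrightarrow> \<bar>RS_sum f g n x \<tau> - I\<bar> < \<epsilon>)"
  unfolding has_RS_integral_def rsfine_def by simp

definition unif :: "real \<Rightarrow> real \<Rightarrow> nat \<Rightarrow> nat \<Rightarrow> real" where
  "unif a b N j = a + (b - a) * real j / real N"

lemma unif_partition:
  assumes "a \<le> b" "N > 0"
  shows "is_partition a b N (unif a b N)"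
  unfolding is_partition_def unif_def using assms
  by (auto simp: divide_simps intro!: mult_left_mono)

lemma unif_fine:
  assumes "a \<le> b" "N > 0" "(b - a) / real N < \<delta>"
  shows "rsfine \<delta> N (unif a b N) (unif a b N)"
proof -
  have "unif a b N (Suc j) - unif a b N j = (b - a) / real N" for j
    unfolding unif_def using assms(2) by (simp add: field_simps)
  moreover have "(b - a) / real N \<ge> 0" using assms by simp
  ultimately show ?thesis unfolding rsfine_def using assms by (auto simp: algebra_simps)
qed

lemma mesh_eventually:
  assumes "a \<le> b" "\<delta> > 0"
  shows "\<exists>N0. \<forall>N\<ge>N0. (b - a) / real (Suc N) < \<delta>"
proof -
  obtain N0 :: nat where N0: "(b - a) / \<delta> < real N0" using reals_Archimedean2 by blast
  have "(b - a) / real (Suc N) < \<delta>" if "N \<ge> N0" for N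
  proof -
    have "b - a < \<delta> * real N0" using N0 assms by (simp add: field_simps)
    also have "\<dots> \<le> \<delta> * real (Suc N)" using that assms by (intro mult_left_mono) auto
    finally show ?thesis by (simp add: field_simps)
  qed
  then show ?thesis by blast
qed

lemma fine_partition_exists:
  assumes "a \<le> b" "\<delta> > 0"
  shows "\<exists>n x. is_partition a b n x \<and> rsfine \<delta> n x x"
proof -
  obtain N0 where "\<forall>N\<ge>N0. (b - a) / real (Suc N) < \<delta>" using mesh_eventually[OF assms] by blast
  then show ?thesis using unif_partition[OF assms(1), of "Suc N0"] unif_fine[OF assms(1), of "Suc N0" \<delta>] by blast
qed

lemma RS_approx:
  assumes "has_RS_integral f g a b I" "a \<le> b" "\<epsilon> > 0" "\<delta>0 > 0"
  shows "\<exists>n x. is_partition a b n x \<and> rsfine \<delta>0 n x x \<and> \<bar>RS_sum f g n x x - I\<bar> < \<epsilon>"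
proof -
  obtain \<delta> where d: "\<delta> > 0" "\<forall>n x \<tau>. is_partition a b n x \<and> rsfine \<delta> n x \<tau> \<longrightarrow> \<bar>RS_sum f g n x \<tau> - I\<bar> < \<epsilon>"
    using assms(1,3) unfolding has_RS_integral_fine by blast
  obtain n x where "is_partition a b n x" "rsfine (min \<delta> \<delta>0) n x x"
    using fine_partition_exists[OF assms(2), of "min \<delta> \<delta>0"] d(1) assms(4) by auto
  moreover then have "rsfine \<delta> n x x" "rsfine \<delta>0 n x x" unfolding rsfine_def by auto
  ultimately show ?thesis using d(2) by blast
qed

lemma RS_unique:
  assumes "has_RS_integral f g a b I" "has_RS_integral f g a b J" "a \<le> b"
  shows "I = J"
proof (rule ccontr)
  assume ne: "I \<noteq> J"
  define \<epsilon> where "\<epsilon> = \<bar>I - J\<bar> / 2"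
  have e: "\<epsilon> > 0" using ne unfolding \<epsilon>_def by simp
  obtain d1 where d1: "d1 > 0" "\<forall>n x \<tau>. is_partition a b n x \<and> rsfine d1 n x \<tau> \<longrightarrow> \<bar>RS_sum f g n x \<tau> - I\<bar> < \<epsilon>"
    using assms(1) e unfolding has_RS_integral_fine by blast
  obtain d2 where d2: "d2 > 0" "\<forall>n x \<tau>. is_partition a b n x \<and> rsfine d2 n x \<tau> \<longrightarrow> \<bar>RS_sum f g n x \<tau> - J\<bar> < \<epsilon>"
    using assms(2) e unfolding has_RS_integral_fine by blast
  obtain n x where p: "is_partition a b n x" "rsfine (min d1 d2) n x x"
    using fine_partition_exists[OF assms(3), of "min d1 d2"] d1(1) d2(1) by auto
  then have "rsfine d1 n x x" "rsfine d2 n x x" unfolding rsfine_def by auto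
  then have "\<bar>RS_sum f g n x x - I\<bar> < \<epsilon>" "\<bar>RS_sum f g n x x - J\<bar> < \<epsilon>" using d1 d2 p by blast+
  then show False using \<epsilon>_def by (auto simp: abs_less_iff abs_if split: if_splits)
qed

lemma RS_integral_eq:
  assumes "has_RS_integral f g a b I" "a \<le> b"
  shows "RS_integral f g a b = I"
  unfolding RS_integral_def using assms RS_unique by blast



lemma RS_exists:
  fixes f g W :: "real \<Rightarrow> real"
  assumes ab: "a \<le> b" and fc: "continuous_on {a..b} f"
    and dom: "\<forall>u v. a \<le> u \<and> u \<le> v \<and> v \<le> b \<longrightarrow> \<bar>g v - g u\<bar> \<le> W v - W u"
  shows "\<exists>I. has_RS_integral f g a b I"
proof -
  define D where "D = W b - W a"
  have D0: "D \<ge> 0" using dom ab unfolding D_def by (metis abs_ge_zero order.trans order_refl)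
  have uc: "uniformly_continuous_on {a..b} f" by (rule compact_uniformly_continuous[OF fc compact_Icc])
  have key: "\<exists>\<delta>>0. \<forall>n x \<tau> m y \<sigma>. is_partition a b n x \<and> rsfine \<delta> n x \<tau> \<and> is_partition a b m y \<and> rsfine \<delta> m y \<sigma>
      \<longrightarrow> \<bar>RS_sum f g n x \<tau> - RS_sum f g m y \<sigma>\<bar> \<le> e" if e: "e > 0" for e
  proof -
    define e' where "e' = e / (D + 1)"
    have e': "e' > 0" using e D0 unfolding e'_def by simp
    obtain d where d: "d > 0" "\<forall>x\<in>{a..b}. \<forall>x'\<in>{a..b}. dist x' x < d \<longrightarrow> dist (f x') (f x) < e'"
      using uc e' unfolding uniformly_continuous_on_def by blast
    have main: "\<bar>RS_sum f g n x \<tau> - RS_sum f g m y \<sigma>\<bar> \<le> e"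
      if P: "is_partition a b n x" "rsfine (d/2) n x \<tau>" and Q: "is_partition a b m y" "rsfine (d/2) m y \<sigma>"
      for n x \<tau> m y \<sigma>
    proof -
      have inv: "\<forall>j<n. \<forall>i<m. x j \<le> y (Suc i) \<and> y i \<le> x (Suc j) \<longrightarrow> \<bar>f (\<tau> j) - f (\<sigma> i)\<bar> \<le> e'"
      proof (intro allI impI)
        fix j i assume ji: "j < n" "i < m" and ov: "x j \<le> y (Suc i) \<and> y i \<le> x (Suc j)"
        have tj: "x j \<le> \<tau> j" "\<tau> j \<le> x (Suc j)" "x (Suc j) - x j < d/2" using P(2) ji unfolding rsfine_def by auto
        have si: "y i \<le> \<sigma> i" "\<sigma> i \<le> y (Suc i)" "y (Suc i) - y i < d/2" using Q(2) ji unfolding rsfine_def by auto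
        have ta: "\<tau> j \<in> {a..b}" using part_range[OF P(1), of j] part_range[OF P(1), of "Suc j"] tj ji by auto
        have sa: "\<sigma> i \<in> {a..b}" using part_range[OF Q(1), of i] part_range[OF Q(1), of "Suc i"] si ji by auto
        have "\<tau> j - \<sigma> i < d" "\<sigma> i - \<tau> j < d" using tj si ov by linarith+
        then have "dist (\<tau> j) (\<sigma> i) < d" unfolding dist_real_def by (simp add: abs_less_iff)
        then have "dist (f (\<tau> j)) (f (\<sigma> i)) < e'" using d(2) ta sa by blast
        then show "\<bar>f (\<tau> j) - f (\<sigma> i)\<bar> \<le> e'" unfolding dist_real_def by simp
      qed
      have "\<bar>RS_sum f g n x \<tau> - RS_sum f g m y \<sigma>\<bar> \<le> e' * (W b - W a)"
        by (rule compare_main[where f=f and g=g and W=W and \<tau>=\<tau> and \<sigma>=\<sigma> and \<epsilon>=e', OF refl P(1) Q(1) inv dom]) (use e' in simp)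
      also have "\<dots> = e * (D / (D + 1))" unfolding e'_def D_def by simp
      also have "\<dots> \<le> e * 1" using D0 e by (intro mult_left_mono) auto
      finally show ?thesis by simp
    qed
    show ?thesis using d(1) main by (intro exI[of _ "d/2"]) auto
  qed
  define S where "S N = RS_sum f g (Suc N) (unif a b (Suc N)) (unif a b (Suc N))" for N
  have SP: "is_partition a b (Suc N) (unif a b (Suc N))" for N using unif_partition ab by simp
  have SF: "\<exists>N0. \<forall>N\<ge>N0. rsfine \<delta> (Suc N) (unif a b (Suc N)) (unif a b (Suc N))" if dpos: "\<delta> > 0" for \<delta>
  proof -
    obtain N0 where "\<forall>N\<ge>N0. (b - a) / real (Suc N) < \<delta>" using mesh_eventually[OF ab dpos] by blast
    then show ?thesis using unif_fine[OF ab] by blast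
  qed
  have "Cauchy S"
  proof (rule CauchyI)
    fix e :: real assume e: "e > 0"
    obtain \<delta> where \<delta>: "\<delta> > 0" "\<forall>n x \<tau> m y \<sigma>. is_partition a b n x \<and> rsfine \<delta> n x \<tau> \<and> is_partition a b m y \<and> rsfine \<delta> m y \<sigma>
      \<longrightarrow> \<bar>RS_sum f g n x \<tau> - RS_sum f g m y \<sigma>\<bar> \<le> e/2" using key[of "e/2"] e by auto
    obtain N0 where N0: "\<forall>N\<ge>N0. rsfine \<delta> (Suc N) (unif a b (Suc N)) (unif a b (Suc N))" using SF[OF \<delta>(1)] by blast
    have "norm (S m - S n) < e" if "m \<ge> N0" "n \<ge> N0" for m n
    proof -
      have "\<bar>S m - S n\<bar> \<le> e/2" unfolding S_def using \<delta>(2) SP N0 that by blast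
      then show ?thesis using e by simp
    qed
    then show "\<exists>M. \<forall>m\<ge>M. \<forall>n\<ge>M. norm (S m - S n) < e" by blast
  qed
  then obtain I where I: "S \<longlonglongrightarrow> I" using Cauchy_convergent_iff convergent_def by blast
  have "has_RS_integral f g a b I" unfolding has_RS_integral_fine
  proof (intro allI impI)
    fix \<epsilon> :: real assume e: "\<epsilon> > 0"
    obtain \<delta> where \<delta>: "\<delta> > 0" "\<forall>n x \<tau> m y \<sigma>. is_partition a b n x \<and> rsfine \<delta> n x \<tau> \<and> is_partition a b m y \<and> rsfine \<delta> m y \<sigma>
      \<longrightarrow> \<bar>RS_sum f g n x \<tau> - RS_sum f g m y \<sigma>\<bar> \<le> \<epsilon>/4" using key[of "\<epsilon>/4"] e by auto
    obtain N0 where N0: "\<forall>N\<ge>N0. rsfine \<delta> (Suc N) (unif a b (Suc N)) (unif a b (Suc N))" using SF[OF \<delta>(1)] by blast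
    obtain N1 where N1: "\<forall>N\<ge>N1. norm (S N - I) < \<epsilon>/2" using LIMSEQ_D[OF I, of "\<epsilon>/2"] e by auto
    define N where "N = max N0 N1"
    have "\<bar>RS_sum f g n x \<tau> - I\<bar> < \<epsilon>" if "is_partition a b n x" "rsfine \<delta> n x \<tau>" for n x \<tau>
    proof -
      have "\<bar>RS_sum f g n x \<tau> - S N\<bar> \<le> \<epsilon>/4" unfolding S_def using \<delta>(2) SP N0 that unfolding N_def by auto
      moreover have "\<bar>S N - I\<bar> < \<epsilon>/2" using N1 unfolding N_def by auto
      ultimately show ?thesis using e unfolding abs_le_iff abs_less_iff by linarith
    qed
    then show "\<exists>\<delta>>0. \<forall>n x \<tau>. is_partition a b n x \<and> rsfine \<delta> n x \<tau> \<longrightarrow> \<bar>RS_sum f g n x \<tau> - I\<bar> < \<epsilon>"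
      using \<delta>(1) by blast
  qed
  then show ?thesis by blast
qed



lemma sum_split_add: "(\<Sum>j<n1+n2. h j) = (\<Sum>j<n1. h j) + (\<Sum>j<n2. h (n1 + j))" for h :: "nat \<Rightarrow> real"
  by (induction n2) simp_all

lemma RS_sum_minus_const:
  assumes "is_partition a b n x"
  shows "RS_sum f g n x \<tau> - c * (g b - g a) = (\<Sum>j<n. (f (\<tau> j) - c) * (g (x (Suc j)) - g (x j)))"
proof -
  have "(\<Sum>j<n. g (x (Suc j)) - g (x j)) = g b - g a"
    using sum_lessThan_telescope[of "\<lambda>j. g (x j)" n] assms unfolding is_partition_def by simp
  then have "c * (g b - g a) = (\<Sum>j<n. c * (g (x (Suc j)) - g (x j)))" by (simp add: sum_distrib_left[symmetric])
  then show ?thesis unfolding RS_sum_def by (simp add: sum_subtractf[symmetric] algebra_simps)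
qed

lemma W_tele:
  fixes W :: "real \<Rightarrow> real"
  assumes "is_partition a b n x"
  shows "(\<Sum>j<n. W (x (Suc j)) - W (x j)) = W b - W a"
  using sum_lessThan_telescope[of "\<lambda>j. W (x j)" n] assms unfolding is_partition_def by simp

lemma RS_bound_const:
  fixes f g W :: "real \<Rightarrow> real"
  assumes J: "has_RS_integral f g a b J" and ab: "a \<le> b"
    and fK: "\<forall>v\<in>{a..b}. \<bar>f v - c\<bar> \<le> K"
    and dom: "\<forall>u v. a \<le> u \<and> u \<le> v \<and> v \<le> b \<longrightarrow> \<bar>g v - g u\<bar> \<le> W v - W u"
  shows "\<bar>J - c * (g b - g a)\<bar> \<le> K * (W b - W a)"
proof (rule field_le_epsilon)
  fix \<epsilon> :: real assume e: "\<epsilon> > 0"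
  obtain n x where P: "is_partition a b n x" "rsfine 1 n x x" "\<bar>RS_sum f g n x x - J\<bar> < \<epsilon>"
    using RS_approx[OF J ab e, of 1] by auto
  have "\<bar>RS_sum f g n x x - c * (g b - g a)\<bar> = \<bar>\<Sum>j<n. (f (x j) - c) * (g (x (Suc j)) - g (x j))\<bar>"
    using RS_sum_minus_const[OF P(1)] by simp
  also have "\<dots> \<le> (\<Sum>j<n. \<bar>(f (x j) - c) * (g (x (Suc j)) - g (x j))\<bar>)" by (rule sum_abs)
  also have "\<dots> \<le> (\<Sum>j<n. K * (W (x (Suc j)) - W (x j)))"
  proof (rule sum_mono)
    fix j assume "j \<in> {..<n}"
    then have j: "j < n" by simp
    have r: "a \<le> x j" "x j \<le> x (Suc j)" "x (Suc j) \<le> b"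
      using part_range[OF P(1), of j] part_range[OF P(1), of "Suc j"] P(1) j unfolding is_partition_def by auto
    have "\<bar>f (x j) - c\<bar> \<le> K" using fK r by auto
    moreover have "\<bar>g (x (Suc j)) - g (x j)\<bar> \<le> W (x (Suc j)) - W (x j)" using dom r by auto
    ultimately show "\<bar>(f (x j) - c) * (g (x (Suc j)) - g (x j))\<bar> \<le> K * (W (x (Suc j)) - W (x j))"
      unfolding abs_mult by (intro mult_mono) auto
  qed
  also have "\<dots> = K * (W b - W a)" using W_tele[OF P(1)] by (simp add: sum_distrib_left[symmetric])
  finally show "\<bar>J - c * (g b - g a)\<bar> \<le> K * (W b - W a) + \<epsilon>" using P(3) unfolding abs_le_iff abs_less_iff by linarith
qed

lemma pow_step:
  fixes p q :: real
  assumes "0 \<le> p" "p \<le> q"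
  shows "p ^ k / fact k * (q - p) \<le> (q ^ Suc k - p ^ Suc k) / fact (Suc k)"
proof -
  have A: "q ^ Suc k - p ^ Suc k = (q - p) * (\<Sum>i<Suc k. q ^ i * p ^ (k - i))" by (rule diff_power_eq_sum)
  have B: "(\<Sum>i<Suc k. q ^ i * p ^ (k - i)) \<ge> (\<Sum>i<Suc k. p ^ k)"
  proof (rule sum_mono)
    fix i assume "i \<in> {..<Suc k}"
    then have ik: "i \<le> k" by simp
    have "p ^ k = p ^ i * p ^ (k - i)" using ik by (metis le_add_diff_inverse power_add)
    also have "\<dots> \<le> q ^ i * p ^ (k - i)" using assms by (intro mult_right_mono power_mono) auto
    finally show "p ^ k \<le> q ^ i * p ^ (k - i)" .
  qed
  have C: "(\<Sum>i<Suc k. p ^ k) = real (Suc k) * p ^ k" by simp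
  have D: "q - p \<ge> 0" using assms by simp
  have E: "q ^ Suc k - p ^ Suc k \<ge> (q - p) * (real (Suc k) * p ^ k)"
    unfolding A using B C D mult_left_mono by metis
  have F: "fact (Suc k) = real (Suc k) * fact k" by simp
  have G: "p ^ k / fact k * (q - p) = (q - p) * (real (Suc k) * p ^ k) / fact (Suc k)"
    unfolding F by simp
  show ?thesis unfolding G by (rule divide_right_mono[OF E]) simp
qed



lemma RS_bound_pow:
  fixes f g W :: "real \<Rightarrow> real"
  assumes J: "has_RS_integral f g a b J" and ab: "a \<le> b"
    and dom: "\<forall>u v. a \<le> u \<and> u \<le> v \<and> v \<le> b \<longrightarrow> \<bar>g v - g u\<bar> \<le> W v - W u"
    and Wa: "W a = 0"
    and fb: "\<forall>v\<in>{a..b}. \<bar>f v\<bar> \<le> W v ^ k / fact k"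
  shows "\<bar>J\<bar> \<le> W b ^ Suc k / fact (Suc k)"
proof (rule field_le_epsilon)
  fix \<epsilon> :: real assume e: "\<epsilon> > 0"
  obtain n x where P: "is_partition a b n x" "rsfine 1 n x x" "\<bar>RS_sum f g n x x - J\<bar> < \<epsilon>"
    using RS_approx[OF J ab e, of 1] by auto
  have "\<bar>RS_sum f g n x x\<bar> \<le> (\<Sum>j<n. \<bar>f (x j) * (g (x (Suc j)) - g (x j))\<bar>)"
    unfolding RS_sum_def by (rule sum_abs)
  also have "\<dots> \<le> (\<Sum>j<n. (W (x (Suc j)) ^ Suc k - W (x j) ^ Suc k) / fact (Suc k))"
  proof (rule sum_mono)
    fix j assume "j \<in> {..<n}"
    then have j: "j < n" by simp
    have r: "a \<le> x j" "x j \<le> x (Suc j)" "x (Suc j) \<le> b"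
      using part_range[OF P(1), of j] part_range[OF P(1), of "Suc j"] P(1) j unfolding is_partition_def by auto
    have W0: "0 \<le> W (x j)" using dom[rule_format, of a "x j"] r Wa by auto
    have W1: "W (x j) \<le> W (x (Suc j))" and dg: "\<bar>g (x (Suc j)) - g (x j)\<bar> \<le> W (x (Suc j)) - W (x j)"
      using dom[rule_format, of "x j" "x (Suc j)"] r by auto
    have "\<bar>f (x j)\<bar> \<le> W (x j) ^ k / fact k" using fb r by auto
    then have "\<bar>f (x j) * (g (x (Suc j)) - g (x j))\<bar> \<le> W (x j) ^ k / fact k * (W (x (Suc j)) - W (x j))"
      unfolding abs_mult using dg by (intro mult_mono) auto
    also have "\<dots> \<le> (W (x (Suc j)) ^ Suc k - W (x j) ^ Suc k) / fact (Suc k)"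
      by (rule pow_step[OF W0 W1])
    finally show "\<bar>f (x j) * (g (x (Suc j)) - g (x j))\<bar> \<le> (W (x (Suc j)) ^ Suc k - W (x j) ^ Suc k) / fact (Suc k)" .
  qed
  also have "\<dots> = (W b ^ Suc k - W a ^ Suc k) / fact (Suc k)"
    using sum_lessThan_telescope[of "\<lambda>j. W (x j) ^ Suc k" n] P(1) unfolding is_partition_def
    by (simp add: sum_divide_distrib[symmetric])
  also have "\<dots> = W b ^ Suc k / fact (Suc k)" using Wa by simp
  finally show "\<bar>J\<bar> \<le> W b ^ Suc k / fact (Suc k) + \<epsilon>" using P(3) unfolding abs_le_iff abs_less_iff by linarith
qed

lemma RS_additive:
  assumes I1: "has_RS_integral f g a c I1" and I2: "has_RS_integral f g c b I2"
    and I: "has_RS_integral f g a b I" and ac: "a \<le> c" and cb: "c \<le> b"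
  shows "I = I1 + I2"
proof -
  have "\<bar>I - (I1 + I2)\<bar> \<le> 3 * \<epsilon>" if e: "\<epsilon> > 0" for \<epsilon>
  proof -
    obtain \<delta> where d: "\<delta> > 0" "\<forall>n x \<tau>. is_partition a b n x \<and> rsfine \<delta> n x \<tau> \<longrightarrow> \<bar>RS_sum f g n x \<tau> - I\<bar> < \<epsilon>"
      using I e unfolding has_RS_integral_fine by blast
    obtain n1 x1 where P1: "is_partition a c n1 x1" "rsfine \<delta> n1 x1 x1" "\<bar>RS_sum f g n1 x1 x1 - I1\<bar> < \<epsilon>"
      using RS_approx[OF I1 ac e d(1)] by auto
    obtain n2 x2 where P2: "is_partition c b n2 x2" "rsfine \<delta> n2 x2 x2" "\<bar>RS_sum f g n2 x2 x2 - I2\<bar> < \<epsilon>"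
      using RS_approx[OF I2 cb e d(1)] by auto
    define x where "x j = (if j \<le> n1 then x1 j else x2 (j - n1))" for j
    have x2c: "x2 0 = c" "x2 n2 = b" "x1 0 = a" "x1 n1 = c" using P1(1) P2(1) unfolding is_partition_def by auto
    have xhi: "x (n1 + j) = x2 j" for j
      unfolding x_def using x2c by (cases j) auto
    have P: "is_partition a b (n1 + n2) x"
      unfolding is_partition_def
    proof (intro conjI allI impI)
      show "x 0 = a" unfolding x_def using x2c by simp
      show "x (n1 + n2) = b" using xhi[of n2] x2c by simp
      fix j assume j: "j < n1 + n2"
      show "x j \<le> x (Suc j)"
      proof (cases "j < n1")
        case True
        then show ?thesis unfolding x_def using P1(1) unfolding is_partition_def by auto
      next
        case False
        define i where "i = j - n1"
        have i: "j = n1 + i" "i < n2" using j False unfolding i_def by auto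
        then show ?thesis using xhi[of i] xhi[of "Suc i"] P2(1) unfolding is_partition_def by simp
      qed
    qed
    have F: "rsfine \<delta> (n1 + n2) x x"
      unfolding rsfine_def
    proof (intro allI impI conjI)
      fix j assume j: "j < n1 + n2"
      show "x (Suc j) - x j < \<delta>"
      proof (cases "j < n1")
        case True
        then show ?thesis unfolding x_def using P1(2) unfolding rsfine_def by auto
      next
        case False
        define i where "i = j - n1"
        have i: "j = n1 + i" "i < n2" using j False unfolding i_def by auto
        then show ?thesis using xhi[of i] xhi[of "Suc i"] P2(2) unfolding rsfine_def by simp
      qed
      show "x j \<le> x j" by simp
      show "x j \<le> x (Suc j)" using P j unfolding is_partition_def by auto
    qed
    have S: "RS_sum f g (n1 + n2) x x = RS_sum f g n1 x1 x1 + RS_sum f g n2 x2 x2"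
    proof -
      have "RS_sum f g (n1 + n2) x x = (\<Sum>j<n1. f (x j) * (g (x (Suc j)) - g (x j))) + (\<Sum>j<n2. f (x (n1 + j)) * (g (x (Suc (n1 + j))) - g (x (n1 + j))))"
        unfolding RS_sum_def by (rule sum_split_add)
      also have "(\<Sum>j<n1. f (x j) * (g (x (Suc j)) - g (x j))) = RS_sum f g n1 x1 x1"
        unfolding RS_sum_def x_def by (intro sum.cong) auto
      also have "(\<Sum>j<n2. f (x (n1 + j)) * (g (x (Suc (n1 + j))) - g (x (n1 + j)))) = RS_sum f g n2 x2 x2"
        unfolding RS_sum_def using xhi by (intro sum.cong) (auto simp del: add_Suc_right simp: add_Suc_right[symmetric])
      finally show ?thesis .
    qed
    have "\<bar>RS_sum f g (n1 + n2) x x - I\<bar> < \<epsilon>" using d(2) P F by blast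
    then show ?thesis using S P1(3) P2(3) unfolding abs_le_iff abs_less_iff by linarith
  qed
  note H = this
  have "\<bar>I - (I1 + I2)\<bar> \<le> 0"
  proof (rule field_le_epsilon)
    fix e :: real assume "e > 0"
    then show "\<bar>I - (I1 + I2)\<bar> \<le> 0 + e" using H[of "e/3"] by simp
  qed
  then show ?thesis by simp
qed



definition vsum :: "(real \<Rightarrow> 'v::real_normed_vector) \<Rightarrow> nat \<Rightarrow> (nat \<Rightarrow> real) \<Rightarrow> real" where
  "vsum \<gamma> n x = (\<Sum>j<n. norm (\<gamma> (x (Suc j)) - \<gamma> (x j)))"

definition Var :: "(real \<Rightarrow> 'v::real_normed_vector) \<Rightarrow> real \<Rightarrow> real \<Rightarrow> real" where
  "Var \<gamma> a u = Sup {vsum \<gamma> n x | n x. is_partition a u n x}"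

lemma part_ext:
  assumes "is_partition a u n x" "u \<le> v"
  shows "is_partition a v (Suc n) (x(Suc n := v))"
    and "vsum \<gamma> (Suc n) (x(Suc n := v)) = vsum \<gamma> n x + norm (\<gamma> v - \<gamma> u)"
proof -
  show "is_partition a v (Suc n) (x(Suc n := v))"
    using assms unfolding is_partition_def by (auto simp: less_Suc_eq)
  have "vsum \<gamma> (Suc n) (x(Suc n := v)) = (\<Sum>j<n. norm (\<gamma> (x (Suc j)) - \<gamma> (x j))) + norm (\<gamma> v - \<gamma> (x n))"
    unfolding vsum_def by (simp add: sum.lessThan_Suc)
  then show "vsum \<gamma> (Suc n) (x(Suc n := v)) = vsum \<gamma> n x + norm (\<gamma> v - \<gamma> u)"
    using assms(1) unfolding is_partition_def vsum_def by simp
qed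

lemma bv_bdd:
  assumes bv: "bounded_variation_on \<gamma> s t" and u: "u \<le> t"
  shows "bdd_above {vsum \<gamma> n x | n x. is_partition s u n x}"
proof -
  obtain M where M: "\<forall>n x. is_partition s t n x \<longrightarrow> vsum \<gamma> n x \<le> M"
    using bv unfolding bounded_variation_on_def vsum_def by blast
  have "vsum \<gamma> n x \<le> M" if "is_partition s u n x" for n x
  proof -
    have "vsum \<gamma> n x \<le> vsum \<gamma> n x + norm (\<gamma> t - \<gamma> u)" by simp
    also have "\<dots> = vsum \<gamma> (Suc n) (x(Suc n := t))" by (rule part_ext(2)[OF that u, symmetric])
    also have "\<dots> \<le> M" using M part_ext(1)[OF that u] by blast
    finally show ?thesis .
  qed
  then show ?thesis unfolding bdd_above_def by blast
qed

lemma part_nonempty: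
  assumes "s \<le> u"
  shows "{vsum \<gamma> n x | n x. is_partition s u n x} \<noteq> {}"
proof -
  have "is_partition s u 1 (\<lambda>j. if j = 0 then s else u)" unfolding is_partition_def using assms by auto
  then show ?thesis by blast
qed

lemma Var_dom:
  assumes bv: "bounded_variation_on \<gamma> s t" and "s \<le> u" "u \<le> v" "v \<le> t"
  shows "Var \<gamma> s u + norm (\<gamma> v - \<gamma> u) \<le> Var \<gamma> s v"
proof -
  have "Var \<gamma> s u \<le> Var \<gamma> s v - norm (\<gamma> v - \<gamma> u)"
    unfolding Var_def
  proof (rule cSup_least)
    show "{vsum \<gamma> n x | n x. is_partition s u n x} \<noteq> {}" using part_nonempty assms by blast
    fix z assume "z \<in> {vsum \<gamma> n x | n x. is_partition s u n x}"
    then obtain n x where z: "z = vsum \<gamma> n x" "is_partition s u n x" by blast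
    have "z + norm (\<gamma> v - \<gamma> u) = vsum \<gamma> (Suc n) (x(Suc n := v))" unfolding z(1) by (rule part_ext(2)[OF z(2) assms(3), symmetric])
    also have "\<dots> \<le> Sup {vsum \<gamma> n x | n x. is_partition s v n x}"
      by (rule cSup_upper) (use part_ext(1)[OF z(2) assms(3)] bv_bdd[OF bv assms(4)] in blast)+
    finally show "z \<le> Sup {vsum \<gamma> n x | n x. is_partition s v n x} - norm (\<gamma> v - \<gamma> u)" by simp
  qed
  then show ?thesis by simp
qed

lemma Var_start: "Var \<gamma> s s = 0"
proof -
  have "{vsum \<gamma> n x | n x. is_partition s s n x} = {0}"
  proof -
    have Z: "vsum \<gamma> n x = 0" if "is_partition s s n x" for n x
    proof -
      have "\<And>j. j \<le> n \<Longrightarrow> x j = s" using part_range[OF that] by (meson order_antisym)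
      then show ?thesis unfolding vsum_def by (intro sum.neutral) auto
    qed
    have P0: "is_partition s s 0 (\<lambda>_. s)" unfolding is_partition_def by simp
    have V0: "vsum \<gamma> 0 (\<lambda>_. s) = 0" unfolding vsum_def by simp
    show ?thesis
    proof (intro equalityI subsetI)
      fix z assume "z \<in> {vsum \<gamma> n x | n x. is_partition s s n x}"
      then show "z \<in> {0}" using Z by blast
    next
      fix z :: real assume "z \<in> {0}"
      then show "z \<in> {vsum \<gamma> n x | n x. is_partition s s n x}" using P0 V0 by force
    qed
  qed
  then show ?thesis unfolding Var_def by simp
qed

lemma coord_dom:
  fixes \<gamma> :: "real \<Rightarrow> 'v::euclidean_space"
  assumes bv: "bounded_variation_on \<gamma> s t" and e: "e \<in> Basis" and "s \<le> u" "u \<le> v" "v \<le> t"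
  shows "\<bar>\<gamma> v \<bullet> e - \<gamma> u \<bullet> e\<bar> \<le> Var \<gamma> s v - Var \<gamma> s u"
proof -
  have "\<bar>\<gamma> v \<bullet> e - \<gamma> u \<bullet> e\<bar> = \<bar>(\<gamma> v - \<gamma> u) \<bullet> e\<bar>" by (simp add: inner_diff_left)
  also have "\<dots> \<le> norm (\<gamma> v - \<gamma> u)" by (rule Basis_le_norm[OF e])
  finally show ?thesis using Var_dom[OF bv assms(3-5)] by simp
qed



lemma frac_lt: "0 \<le> D \<Longrightarrow> 0 < (\<epsilon>::real) \<Longrightarrow> \<epsilon> / (2 * (D + 1)) * D < \<epsilon> / 2"
  by (simp add: field_simps)

lemma sig_props:
  fixes \<gamma> :: "real \<Rightarrow> 'v::euclidean_space"
  assumes st: "s \<le> t" and cont: "continuous_on {s..t} \<gamma>" and bv: "bounded_variation_on \<gamma> s t"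
  shows "set w \<subseteq> Basis \<Longrightarrow> continuous_on {s..t} (sig_rev \<gamma> s w) \<and>
     (\<forall>u\<in>{s..t}. \<bar>sig_rev \<gamma> s w u\<bar> \<le> Var \<gamma> s u ^ length w / fact (length w))"
proof (induction w)
  case Nil
  show ?case by simp
next
  case (Cons e w)
  define f where "f = sig_rev \<gamma> s w"
  define g where "g = (\<lambda>u. \<gamma> u \<bullet> e)"
  define W where "W = Var \<gamma> s"
  define F where "F = sig_rev \<gamma> s (e # w)"
  define k where "k = length w"
  have e: "e \<in> Basis" and wB: "set w \<subseteq> Basis" using Cons.prems by auto
  have fc: "continuous_on {s..t} f" and fb: "\<forall>u\<in>{s..t}. \<bar>f u\<bar> \<le> W u ^ k / fact k"
    using Cons.IH[OF wB] unfolding f_def W_def k_def by auto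
  have gc: "continuous_on {s..t} g" unfolding g_def by (intro continuous_intros cont)
  have dom: "\<bar>g v - g u\<bar> \<le> W v - W u" if "s \<le> u" "u \<le> v" "v \<le> t" for u v
    unfolding g_def W_def using coord_dom[OF bv e that] .
  have W0: "W s = 0" unfolding W_def by (rule Var_start)
  have Wmono: "W u \<le> W v" if "s \<le> u" "u \<le> v" "v \<le> t" for u v
    using dom[OF that] by (meson abs_ge_zero diff_ge_0_iff_ge order_trans)
  have Wnn: "0 \<le> W u" if "s \<le> u" "u \<le> t" for u using Wmono[of s u] that W0 by simp
  have HI: "\<exists>I. has_RS_integral f g a b I" if "s \<le> a" "a \<le> b" "b \<le> t" for a b
  proof (rule RS_exists)
    show "a \<le> b" by fact
    show "continuous_on {a..b} f" by (rule continuous_on_subset[OF fc]) (use that in auto)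
    show "\<forall>u v. a \<le> u \<and> u \<le> v \<and> v \<le> b \<longrightarrow> \<bar>g v - g u\<bar> \<le> W v - W u" using dom that by auto
  qed
  have HF: "has_RS_integral f g s u (F u)" if u0: "s \<le> u" "u \<le> t" for u
  proof -
    obtain I where I: "has_RS_integral f g s u I" using HI[of s u] u0 by auto
    have "F u = RS_integral f g s u" unfolding F_def f_def g_def by simp
    also have "\<dots> = I" using RS_integral_eq[OF I] u0 by simp
    finally show ?thesis using I by simp
  qed
  have Fb: "\<forall>u\<in>{s..t}. \<bar>F u\<bar> \<le> W u ^ Suc k / fact (Suc k)"
  proof
    fix u assume u: "u \<in> {s..t}"
    show "\<bar>F u\<bar> \<le> W u ^ Suc k / fact (Suc k)"
    proof (rule RS_bound_pow[OF HF])
      show "s \<le> u" "u \<le> t" "s \<le> u" using u by auto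
      show "\<forall>p q. s \<le> p \<and> p \<le> q \<and> q \<le> u \<longrightarrow> \<bar>g q - g p\<bar> \<le> W q - W p" using dom u by auto
      show "W s = 0" by fact
      show "\<forall>v\<in>{s..u}. \<bar>f v\<bar> \<le> W v ^ k / fact k" using fb u by auto
    qed
  qed
  define B where "B = W t ^ k / fact k"
  define D where "D = W t - W s"
  have B0: "B \<ge> 0" unfolding B_def using Wnn[of t] st by simp
  have D0: "D \<ge> 0" unfolding D_def using Wmono[of s t] st by simp
  have fB: "\<bar>f v\<bar> \<le> B" if "s \<le> v" "v \<le> t" for v
  proof -
    have "\<bar>f v\<bar> \<le> W v ^ k / fact k" using fb that by auto
    also have "\<dots> \<le> B" unfolding B_def
      by (intro divide_right_mono power_mono Wmono Wnn) (use that in auto)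
    finally show ?thesis .
  qed
  have ucf: "uniformly_continuous_on {s..t} f" by (rule compact_uniformly_continuous[OF fc compact_Icc])
  have ucg: "uniformly_continuous_on {s..t} g" by (rule compact_uniformly_continuous[OF gc compact_Icc])
  have claim: "\<exists>d>0. \<forall>u u'. s \<le> u \<and> u \<le> u' \<and> u' \<le> t \<and> u' - u < d \<longrightarrow> \<bar>F u' - F u\<bar> < \<epsilon>"
    if eps: "\<epsilon> > 0" for \<epsilon>
  proof -
    define e1 where "e1 = \<epsilon> / (2 * (B + 1))"
    define e2 where "e2 = \<epsilon> / (2 * (D + 1))"
    have e1: "e1 > 0" unfolding e1_def using eps B0 by simp
    have e2: "e2 > 0" unfolding e2_def using eps D0 by simp
    obtain d1 where d1: "d1 > 0" "\<forall>x\<in>{s..t}. \<forall>x'\<in>{s..t}. dist x' x < d1 \<longrightarrow> dist (g x') (g x) < e1"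
      using ucg e1 unfolding uniformly_continuous_on_def by blast
    obtain d2 where d2: "d2 > 0" "\<forall>x\<in>{s..t}. \<forall>x'\<in>{s..t}. dist x' x < d2 \<longrightarrow> dist (f x') (f x) < e2"
      using ucf e2 unfolding uniformly_continuous_on_def by blast
    have "\<bar>F u' - F u\<bar> < \<epsilon>" if uu: "s \<le> u" "u \<le> u'" "u' \<le> t" "u' - u < min d1 d2" for u u'
    proof -
      obtain J where J: "has_RS_integral f g u u' J" using HI[of u u'] uu by auto
      have add: "F u' = F u + J" by (rule RS_additive[OF HF[of u] J HF[of u']]) (use uu in auto)
      have K: "\<forall>v\<in>{u..u'}. \<bar>f v - f u\<bar> \<le> e2"
      proof
        fix v assume v: "v \<in> {u..u'}"
        have "dist v u < d2" using v uu unfolding dist_real_def by auto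
        then have "dist (f v) (f u) < e2" using d2(2) v uu by auto
        then show "\<bar>f v - f u\<bar> \<le> e2" unfolding dist_real_def by simp
      qed
      have Jb: "\<bar>J - f u * (g u' - g u)\<bar> \<le> e2 * (W u' - W u)"
        by (rule RS_bound_const[OF J _ K]) (use uu dom in auto)
      have "dist u' u < d1" using uu unfolding dist_real_def by auto
      then have gd: "\<bar>g u' - g u\<bar> < e1" using d1(2) uu unfolding dist_real_def by auto
      have "\<bar>f u * (g u' - g u)\<bar> \<le> B * e1"
        unfolding abs_mult using fB[of u] uu gd B0 by (intro mult_mono) auto
      also have "B * e1 < \<epsilon> / 2" unfolding e1_def using frac_lt[OF B0 eps] by (simp add: mult.commute)
      finally have t1: "\<bar>f u * (g u' - g u)\<bar> < \<epsilon> / 2" .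
      have "W u' - W u \<le> D" unfolding D_def using Wmono[of s u] Wmono[of u' t] uu by auto
      then have "e2 * (W u' - W u) \<le> e2 * D" using e2 by (intro mult_left_mono) auto
      also have "\<dots> < \<epsilon> / 2" unfolding e2_def using frac_lt[OF D0 eps] .
      finally have t2: "e2 * (W u' - W u) < \<epsilon> / 2" .
      have "\<bar>F u' - F u\<bar> = \<bar>J\<bar>" using add by simp
      then show ?thesis using Jb t1 t2 unfolding abs_le_iff abs_less_iff by linarith
    qed
    then show ?thesis using d1(1) d2(1) by (intro exI[of _ "min d1 d2"]) auto
  qed
  have Fc: "continuous_on {s..t} F"
    unfolding continuous_on_iff
  proof (intro ballI allI impI)
    fix x and \<epsilon> :: real assume x: "x \<in> {s..t}" and eps: "\<epsilon> > 0"
    obtain d where d: "d > 0" "\<forall>u u'. s \<le> u \<and> u \<le> u' \<and> u' \<le> t \<and> u' - u < d \<longrightarrow> \<bar>F u' - F u\<bar> < \<epsilon>"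
      using claim[OF eps] by blast
    have "dist (F x') (F x) < \<epsilon>" if x': "x' \<in> {s..t}" "dist x' x < d" for x'
    proof (cases "x \<le> x'")
      case True
      then show ?thesis using d(2) x x' unfolding dist_real_def by auto
    next
      case False
      then have "\<bar>F x - F x'\<bar> < \<epsilon>" using d(2) x x' unfolding dist_real_def by auto
      then show ?thesis unfolding dist_real_def by (simp add: abs_minus_commute)
    qed
    then show "\<exists>d>0. \<forall>x'\<in>{s..t}. dist x' x < d \<longrightarrow> dist (F x') (F x) < \<epsilon>" using d(1) by blast
  qed
  show ?case using Fc Fb unfolding F_def W_def k_def by simp
qed



theorem mainTheorem10:
  fixes \<phi> :: "nat \<Rightarrow> real"
  assumes phi_pos: "\<forall>k. \<phi> k > 0"
    and phi_sum: "\<forall>C::real. C > 0 \<longrightarrow> summable (\<lambda>k. C ^ k * \<phi> k / (fact k)\<^sup>2)"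
  shows "\<forall>(\<gamma>::real \<Rightarrow> 'v::euclidean_space) s t.
           s < t \<and> continuous_on {s..t} \<gamma> \<and> bounded_variation_on \<gamma> s t
           \<longrightarrow> signature \<gamma> s t \<in> T_phi \<phi>"
proof (intro allI impI)
  fix \<gamma> :: "real \<Rightarrow> 'v" and s t :: real
  assume H: "s < t \<and> continuous_on {s..t} \<gamma> \<and> bounded_variation_on \<gamma> s t"
  then have st: "s \<le> t" and cont: "continuous_on {s..t} \<gamma>" and bv: "bounded_variation_on \<gamma> s t" by auto
  define L where "L = Var \<gamma> s t"
  define d where "d = real (card (Basis :: 'v set))"
  define C where "C = d * L\<^sup>2 + 1"
  have C0: "C > 0" unfolding C_def d_def by (simp add: add_nonneg_pos)
  have wb: "\<bar>signature \<gamma> s t w\<bar> \<le> L ^ k / fact k" if w: "w \<in> words k" for w k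
  proof -
    have "set (rev w) \<subseteq> Basis" "length (rev w) = k" using w unfolding words_def by auto
    then show ?thesis using sig_props[OF st cont bv, of "rev w"] st unfolding signature_def L_def by auto
  qed
  have fin: "finite (words k :: 'v list set)" for k
    unfolding words_def using finite_lists_length_eq[of "Basis :: 'v set" k] by (simp add: conj_commute)
  have card: "real (card (words k :: 'v list set)) = d ^ k" for k
    unfolding words_def d_def using card_lists_length_eq[of "Basis :: 'v set" k] by (simp add: conj_commute)
  have lev: "level_norm2 (signature \<gamma> s t) k \<le> d ^ k * (L ^ k / fact k)\<^sup>2" for k
  proof -
    have "level_norm2 (signature \<gamma> s t) k \<le> (\<Sum>w\<in>(words k :: 'v list set). (L ^ k / fact k)\<^sup>2)"
      unfolding level_norm2_def
    proof (rule sum_mono)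
      fix w :: "'v list" assume "w \<in> words k"
      then have "\<bar>signature \<gamma> s t w\<bar> \<le> L ^ k / fact k" by (rule wb)
      then have "\<bar>signature \<gamma> s t w\<bar>\<^sup>2 \<le> (L ^ k / fact k)\<^sup>2" by (rule power_mono[OF _ abs_ge_zero])
      then show "(signature \<gamma> s t w)\<^sup>2 \<le> (L ^ k / fact k)\<^sup>2" by simp
    qed
    also have "\<dots> = d ^ k * (L ^ k / fact k)\<^sup>2" using card[of k] by simp
    finally show ?thesis .
  qed
  have "summable (\<lambda>k. C ^ k * \<phi> k / (fact k)\<^sup>2)" using phi_sum C0 by blast
  then have "summable (\<lambda>k. \<phi> k * level_norm2 (signature \<gamma> s t) k)"
  proof (rule summable_comparison_test')
    fix k :: nat
    have ln0: "level_norm2 (signature \<gamma> s t) k \<ge> 0" unfolding level_norm2_def by (intro sum_nonneg) auto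
    have p0: "\<phi> k > 0" using phi_pos by blast
    have "norm (\<phi> k * level_norm2 (signature \<gamma> s t) k) = \<phi> k * level_norm2 (signature \<gamma> s t) k"
      using ln0 p0 by simp
    also have "\<dots> \<le> \<phi> k * (d ^ k * (L ^ k / fact k)\<^sup>2)" using lev[of k] p0 by (intro mult_left_mono) auto
    also have "\<dots> = (d * L\<^sup>2) ^ k * \<phi> k / (fact k)\<^sup>2"
    proof -
      have e: "(L ^ k)\<^sup>2 = (L\<^sup>2) ^ k" by (simp add: power_mult[symmetric] mult.commute)
      show ?thesis by (simp add: power_divide power_mult_distrib e)
    qed
    also have "\<dots> \<le> C ^ k * \<phi> k / (fact k)\<^sup>2"
      unfolding C_def d_def using p0 by (intro divide_right_mono mult_right_mono power_mono) auto
    finally show "norm (\<phi> k * level_norm2 (signature \<gamma> s t) k) \<le> C ^ k * \<phi> k / (fact k)\<^sup>2" .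
  qed
  then show "signature \<gamma> s t \<in> T_phi \<phi>" unfolding T_phi_def by simp
qed


end
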